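(* For every fixed integer $k\ge1$, as formal power series in $y$, \[ \sum_{n\ge0}q_{n,k}y^n=\frac{(2-y)y^{2k}}{(1-y-y^2)^{k+1}}+y\,\delta_{k1}, \] where $\delta$ is the Kronecker delta.
   Context: For $n\ge1$ let $\Xi_n$ be the poset on $\{x_1,\dots,x_n\}$ whose cover relations are exactly: $x_2\prec x_1$, $x_3\prec x_2$, and for $3\le i\le n-1$, $x_i\prec x_{i+1}$ if $i$ is odd and $x_{i+1}\prec x_i$ if $i$ is even (so $x_1>x_2>x_3<x_4>x_5<\cdots$). A filter of a poset is an up-closed subset. The matchable Lucas cube $\Omega_n$ is the graph whose vertices are the filters of $\Xi_n$, two filters adjacent iff one is obtained from the other by deleting a single element; $\Omega_0$ is the one-vertex graph. $q_{n,k}$ denotes the number of induced subgraphs of $\Omega_n$ isomorphic to the $k$-dimensional hypercube ($0$ if there are none). *)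

theory Defs
  imports Main "HOL-Computational_Algebra.Formal_Power_Series"
begin

text \<open>Element x_i of the poset Xi_n is represented by the natural number i, 1 \<le> i \<le> n.
  xi_cover n a b means x_a is covered by x_b (x_a \<prec> x_b).\<close>
definition xi_cover :: "nat \<Rightarrow> nat \<Rightarrow> nat \<Rightarrow> bool" where
  "xi_cover n a b \<longleftrightarrow>
     (a = 2 \<and> b = 1 \<and> 2 \<le> n) \<or>
     (a = 3 \<and> b = 2 \<and> 3 \<le> n) \<or>
     (3 \<le> a \<and> a \<le> n - 1 \<and> odd a \<and> b = a + 1) \<or>
     (3 \<le> b \<and> b \<le> n - 1 \<and> even b \<and> a = b + 1)"

definition xi_le :: "nat \<Rightarrow> nat \<Rightarrow> nat \<Rightarrow> bool" where
  "xi_le n = (xi_cover n)\<^sup>*\<^sup>*"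

definition xi_filter :: "nat \<Rightarrow> nat set \<Rightarrow> bool" where
  "xi_filter n F \<longleftrightarrow> F \<subseteq> {1..n} \<and> (\<forall>x y. x \<in> F \<longrightarrow> y \<in> {1..n} \<longrightarrow> xi_le n x y \<longrightarrow> y \<in> F)"

definition omega_vertices :: "nat \<Rightarrow> nat set set" where
  "omega_vertices n = {F. xi_filter n F}"

definition omega_adj :: "nat set \<Rightarrow> nat set \<Rightarrow> bool" where
  "omega_adj F G \<longleftrightarrow> (\<exists>x\<in>F. G = F - {x}) \<or> (\<exists>x\<in>G. F = G - {x})"

definition hypercube_adj :: "nat set \<Rightarrow> nat set \<Rightarrow> bool" where
  "hypercube_adj A B \<longleftrightarrow> card ((A - B) \<union> (B - A)) = 1"

definition q :: "nat \<Rightarrow> nat \<Rightarrow> nat" where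
  "q n k = card {S. S \<subseteq> omega_vertices n \<and>
     (\<exists>f. bij_betw f (Pow {..<k}) S \<and>
          (\<forall>A\<in>Pow {..<k}. \<forall>B\<in>Pow {..<k}. omega_adj (f A) (f B) \<longleftrightarrow> hypercube_adj A B))}"

end

theory Submission
  imports Defs
begin

unbundle fps_syntax


lemma xi_cover_range: "xi_cover n a b \<Longrightarrow> a \<in> {1..n} \<and> b \<in> {1..n}"
  unfolding xi_cover_def by auto

lemma xi_cover_irrefl: "\<not> xi_cover n a a"
  unfolding xi_cover_def by auto

lemma xi_filter_iff:
  "xi_filter n F \<longleftrightarrow> F \<subseteq> {1..n} \<and> (\<forall>a b. xi_cover n a b \<longrightarrow> a \<in> F \<longrightarrow> b \<in> F)"
proof
  assume "xi_filter n F"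
  then show "F \<subseteq> {1..n} \<and> (\<forall>a b. xi_cover n a b \<longrightarrow> a \<in> F \<longrightarrow> b \<in> F)"
    unfolding xi_filter_def xi_le_def using xi_cover_range by blast
next
  assume H: "F \<subseteq> {1..n} \<and> (\<forall>a b. xi_cover n a b \<longrightarrow> a \<in> F \<longrightarrow> b \<in> F)"
  have "(xi_cover n)\<^sup>*\<^sup>* x y \<Longrightarrow> x \<in> F \<Longrightarrow> y \<in> F" for x y
    by (induction rule: rtranclp_induct) (use H in auto)
  then show "xi_filter n F" using H unfolding xi_filter_def xi_le_def by blast
qed

definition down :: "nat \<Rightarrow> bool" where "down n \<longleftrightarrow> n \<le> 2 \<or> even n"

definition newcov :: "nat \<Rightarrow> nat \<Rightarrow> nat \<Rightarrow> bool" where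
  "newcov n a b \<longleftrightarrow> 1 \<le> n \<and> ((down n \<and> a = n+1 \<and> b = n) \<or> (\<not> down n \<and> a = n \<and> b = n+1))"

lemma xi_cover_Suc: "xi_cover (Suc n) a b \<longleftrightarrow> xi_cover n a b \<or> newcov n a b"
proof
  assume H: "xi_cover (Suc n) a b"
  show "xi_cover n a b \<or> newcov n a b"
  proof (cases "xi_cover n a b")
    case False
    have "newcov n a b"
      using H False unfolding xi_cover_def newcov_def down_def
      by (elim disjE conjE; simp; presburger)
    then show ?thesis by simp
  qed simp
next
  assume H: "xi_cover n a b \<or> newcov n a b"
  show "xi_cover (Suc n) a b"
  proof (cases "xi_cover n a b")
    case True
    then show ?thesis unfolding xi_cover_def by auto
  next
    case False
    then have "newcov n a b" using H by simp
    then show ?thesis unfolding xi_cover_def newcov_def down_def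
      by (elim disjE conjE; simp; presburger)
  qed
qed

definition sd :: "'a set \<Rightarrow> 'a set \<Rightarrow> 'a set" where
  "sd A B = (A - B) \<union> (B - A)"

lemma sd_sd: "sd X (sd X Y) = Y" unfolding sd_def by auto

lemma sd_single: "sd X Y = {e} \<Longrightarrow> Y = sd X {e}" unfolding sd_def by auto

lemma sd_comm: "sd X Y = sd Y X" unfolding sd_def by auto

lemma omega_adj_sd: "omega_adj X Y \<longleftrightarrow> (\<exists>x. sd X Y = {x})"
proof
  assume "omega_adj X Y"
  then consider x where "x \<in> X" "Y = X - {x}" | x where "x \<in> Y" "X = Y - {x}"
    unfolding omega_adj_def by blast
  then show "\<exists>x. sd X Y = {x}"
  proof cases
    case (1 x)
    then have "sd X Y = {x}" unfolding sd_def by auto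
    then show ?thesis by blast
  next
    case (2 x)
    then have "sd X Y = {x}" unfolding sd_def by auto
    then show ?thesis by blast
  qed
next
  assume "\<exists>x. sd X Y = {x}"
  then obtain x where x: "(X - Y) \<union> (Y - X) = {x}" unfolding sd_def by blast
  then have x': "\<And>z. ((z \<in> X \<and> z \<notin> Y) \<or> (z \<in> Y \<and> z \<notin> X)) \<longleftrightarrow> z = x"
    by (simp add: set_eq_iff)
  show "omega_adj X Y"
  proof (cases "x \<in> X")
    case True
    have "Y = X - {x}"
    proof (rule set_eqI)
      fix z show "z \<in> Y \<longleftrightarrow> z \<in> X - {x}" using x'[of z] x'[of x] True by blast
    qed
    then show ?thesis unfolding omega_adj_def using True by blast
  next
    case False
    have "X = Y - {x}"
    proof (rule set_eqI)
      fix z show "z \<in> X \<longleftrightarrow> z \<in> Y - {x}" using x'[of z] x'[of x] False by blast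
    qed
    moreover have "x \<in> Y" using x'[of x] False by blast
    ultimately show ?thesis unfolding omega_adj_def by blast
  qed
qed

lemma hyper_adj_sd: "hypercube_adj A B \<longleftrightarrow> (\<exists>x. sd A B = {x})"
  unfolding hypercube_adj_def sd_def by (simp add: card_1_singleton_iff)

lemma cube_shape:
  fixes f :: "'a set \<Rightarrow> 'b set"
  assumes inj: "inj_on f (Pow K)" and fin: "finite K"
    and adj: "\<And>A B. A \<subseteq> K \<Longrightarrow> B \<subseteq> K \<Longrightarrow> (\<exists>x. sd A B = {x}) \<Longrightarrow> (\<exists>x. sd (f A) (f B) = {x})"
  shows "\<exists>g. inj_on g K \<and> (\<forall>A. A \<subseteq> K \<longrightarrow> f A = sd (f {}) (g ` A))"
proof -
  define F where "F = f {}"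
  define g where "g i = (THE x. sd F (f {i}) = {x})" for i
  have g1: "sd F (f {i}) = {g i}" if "i \<in> K" for i
  proof -
    have "\<exists>x. sd F (f {i}) = {x}" unfolding F_def
      by (rule adj) (use that in \<open>auto simp: sd_def\<close>)
    then obtain x where x: "sd F (f {i}) = {x}" by blast
    have "g i = x" unfolding g_def by (rule the_equality) (use x in auto)
    with x show ?thesis by simp
  qed
  have g2: "f {i} = sd F {g i}" if "i \<in> K" for i
    using sd_single[OF g1[OF that]] .
  have ginj: "inj_on g K"
  proof (rule inj_onI)
    fix i j assume "i \<in> K" "j \<in> K" "g i = g j"
    then have "f {i} = f {j}" using g2 by simp
    then show "i = j" using inj \<open>i \<in> K\<close> \<open>j \<in> K\<close> by (auto dest: inj_onD)
  qed
  have main: "\<forall>A. A \<subseteq> K \<longrightarrow> card A = m \<longrightarrow> f A = sd F (g ` A)" for m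
  proof (induction m rule: less_induct)
    case (less m)
    show ?case
    proof (intro allI impI)
      fix A assume AK: "A \<subseteq> K" and cA: "card A = m"
      have finA: "finite A" using AK fin finite_subset by blast
      consider "m = 0" | "m = 1" | "m \<ge> 2" by linarith
      then show "f A = sd F (g ` A)"
      proof cases
        case 1
        then have "A = {}" using cA finA by simp
        then show ?thesis unfolding F_def sd_def by simp
      next
        case 2
        then obtain i where "A = {i}" using cA card_1_singleton_iff[of A] by auto
        then show ?thesis using g2 AK by simp
      next
        case 3
        have "A \<noteq> {}" using cA 3 by auto
        then obtain i where i: "i \<in> A" by blast
        have "A - {i} \<noteq> {}"
        proof
          assume "A - {i} = {}"
          then have "A = {i}" using i by blast
          then show False using cA 3 by simp
        qed
        then obtain j where j: "j \<in> A - {i}" by blast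
        then have ji: "j \<in> A" "j \<noteq> i" by auto
        define A1 where "A1 = A - {i}"
        define A2 where "A2 = A - {j}"
        define A12 where "A12 = A - {i, j}"
        have K1: "A1 \<subseteq> K" "A2 \<subseteq> K" "A12 \<subseteq> K" using AK unfolding A1_def A2_def A12_def by auto
        have c1: "card A1 < m" unfolding A1_def using cA i finA 3 by simp
        have c2: "card A2 < m" unfolding A2_def using cA ji finA 3 by simp
        have "card A12 = card A - 2" unfolding A12_def
          using card_Diff_subset[of "{i,j}" A] ji i finA by simp
        then have c12: "card A12 < m" using cA 3 by simp
        have IH1: "f A1 = sd F (g ` A1)" using less[OF c1] K1 by simp
        have IH2: "f A2 = sd F (g ` A2)" using less[OF c2] K1 by simp
        have IH12: "f A12 = sd F (g ` A12)" using less[OF c12] K1 by simp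
        have "sd A1 A = {i}" unfolding sd_def A1_def using i by auto
        then have "\<exists>x. sd (f A1) (f A) = {x}"
          using adj[of A1 A] K1 AK by blast
        then obtain e1 where "sd (f A1) (f A) = {e1}" by blast
        then have e1: "f A = sd (f A1) {e1}" by (rule sd_single)
        have "sd A2 A = {j}" unfolding sd_def A2_def using ji by auto
        then have "\<exists>x. sd (f A2) (f A) = {x}"
          using adj[of A2 A] K1 AK by blast
        then obtain e2 where "sd (f A2) (f A) = {e2}" by blast
        then have e2: "f A = sd (f A2) {e2}" by (rule sd_single)
        have gi: "g ` A1 = g ` A - {g i}" unfolding A1_def
          using ginj AK i by (simp add: inj_on_image_set_diff[of g K] subset_eq)
        have gj: "g ` A2 = g ` A - {g j}" unfolding A2_def
          using ginj AK ji by (simp add: inj_on_image_set_diff[of g K] subset_eq)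
        have gij: "g ` A12 = g ` A - {g i, g j}" unfolding A12_def
          using ginj AK ji i by (simp add: inj_on_image_set_diff[of g K] subset_eq)
        have neq: "g i \<noteq> g j" using ginj AK i ji by (auto simp: inj_on_def)
        have giA: "g i \<in> g ` A" "g j \<in> g ` A" using i ji by auto
        have "sd (f A1) {e1} = sd (f A2) {e2}" using e1 e2 by simp
        then have eq: "sd (sd F (g ` A - {g i})) {e1} = sd (sd F (g ` A - {g j})) {e2}"
          unfolding IH1 IH2 gi gj .
        show ?thesis
        proof (cases "e1 = g i")
          case True
          have "f A = sd (sd F (g ` A - {g i})) {g i}" using e1 IH1 gi True by simp
          also have "\<dots> = sd F (g ` A)" using giA unfolding sd_def by auto
          finally show ?thesis .
        next
          case False
          have "e2 = g i"
          proof (rule ccontr)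
            assume "e2 \<noteq> g i"
            have "g i \<in> sd (sd F (g ` A - {g j})) {e2} \<longleftrightarrow> g i \<notin> F"
              using \<open>e2 \<noteq> g i\<close> neq giA by (simp add: sd_def)
            moreover have "g i \<in> sd (sd F (g ` A - {g i})) {e1} \<longleftrightarrow> g i \<in> F"
              using False by (simp add: sd_def)
            ultimately show False using eq by simp
          qed
          have "e1 = g j"
          proof (rule ccontr)
            assume "e1 \<noteq> g j"
            have "g j \<in> sd (sd F (g ` A - {g i})) {e1} \<longleftrightarrow> g j \<notin> F"
              using \<open>e1 \<noteq> g j\<close> neq giA by (simp add: sd_def)
            moreover have "g j \<in> sd (sd F (g ` A - {g j})) {e2} \<longleftrightarrow> g j \<in> F"
              using \<open>e2 = g i\<close> neq by (simp add: sd_def)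
            ultimately show False using eq by simp
          qed
          have "f A = sd (sd F (g ` A - {g i})) {g j}" using e1 IH1 gi \<open>e1 = g j\<close> by simp
          also have "\<dots> = sd F (g ` A - {g i, g j})" using giA neq unfolding sd_def by auto
          also have "\<dots> = f A12" using IH12 gij by simp
          finally have "f A = f A12" .
          moreover have "A \<noteq> A12" using i unfolding A12_def by auto
          ultimately show ?thesis using inj AK K1 by (auto dest: inj_onD)
        qed
      qed
    qed
  qed
  show ?thesis using ginj main unfolding F_def by blast
qed

definition good :: "nat \<Rightarrow> nat set \<Rightarrow> nat set \<Rightarrow> bool" where
  "good n L D \<longleftrightarrow> L \<inter> D = {} \<and> L \<union> D \<subseteq> {1..n} \<and>
     (\<forall>a b. xi_cover n a b \<longrightarrow> a \<in> L \<union> D \<longrightarrow> b \<in> L)"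

lemma filters_good:
  assumes "L \<inter> D = {}"
  shows "(\<forall>T\<subseteq>D. xi_filter n (L \<union> T)) \<longleftrightarrow> good n L D"
proof
  assume H: "\<forall>T\<subseteq>D. xi_filter n (L \<union> T)"
  have L: "xi_filter n L" using H by (metis Un_empty_right empty_subsetI)
  have Ld: "xi_filter n (L \<union> {d})" if "d \<in> D" for d using H that by blast
  have "L \<union> D \<subseteq> {1..n}"
  proof
    fix x assume "x \<in> L \<union> D"
    then show "x \<in> {1..n}"
    proof
      assume "x \<in> L" then show ?thesis using L by (auto simp: xi_filter_iff)
    next
      assume "x \<in> D" then show ?thesis using Ld[of x] by (auto simp: xi_filter_iff)
    qed
  qed
  moreover have "b \<in> L" if c: "xi_cover n a b" and a: "a \<in> L \<union> D" for a b
  proof (cases "a \<in> L")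
    case True then show ?thesis using L c by (auto simp: xi_filter_iff)
  next
    case False
    then have "a \<in> D" using a by blast
    then have "b \<in> L \<union> {a}" using Ld[of a] c by (auto simp: xi_filter_iff)
    moreover have "b \<noteq> a" using c xi_cover_irrefl by blast
    ultimately show ?thesis by blast
  qed
  ultimately show "good n L D" unfolding good_def using assms by blast
next
  assume G: "good n L D"
  show "\<forall>T\<subseteq>D. xi_filter n (L \<union> T)"
  proof (intro allI impI)
    fix T assume "T \<subseteq> D"
    then show "xi_filter n (L \<union> T)" using G unfolding good_def xi_filter_iff by blast
  qed
qed

definition img :: "nat set \<Rightarrow> nat set \<Rightarrow> nat set set" where
  "img L D = (\<lambda>T. L \<union> T) ` Pow D"

lemma img_inj:
  assumes "L \<inter> D = {}" "L' \<inter> D' = {}" "img L D = img L' D'"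
  shows "L = L' \<and> D = D'"
proof -
  have "L \<in> img L' D'" using assms(3) unfolding img_def by auto
  then obtain T where T: "T \<subseteq> D'" "L = L' \<union> T" unfolding img_def by auto
  have "L' \<in> img L D" using assms(3) unfolding img_def by auto
  then obtain T' where T': "T' \<subseteq> D" "L' = L \<union> T'" unfolding img_def by auto
  have LL: "L = L'" using T T' by blast
  have "L \<union> D \<in> img L' D'" using assms(3) unfolding img_def by auto
  then obtain U where U: "U \<subseteq> D'" "L \<union> D = L' \<union> U" unfolding img_def by auto
  then have "D \<subseteq> D'" using assms(1,2) LL by blast
  have "L' \<union> D' \<in> img L D" using assms(3) unfolding img_def by auto
  then obtain U' where U': "U' \<subseteq> D" "L' \<union> D' = L \<union> U'" unfolding img_def by auto
  then have "D' \<subseteq> D" using assms(1,2) LL by blast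
  show ?thesis using LL \<open>D \<subseteq> D'\<close> \<open>D' \<subseteq> D\<close> by blast
qed

lemma sd_image_card:
  assumes "L \<inter> D = {}" "bij_betw h K D" "A \<subseteq> K" "B \<subseteq> K"
  shows "card (sd (L \<union> h ` A) (L \<union> h ` B)) = card (sd A B)"
proof -
  have inj: "inj_on h K" and hK: "h ` K = D" using assms(2) by (auto simp: bij_betw_def)
  have hA: "h ` A \<subseteq> D" "h ` B \<subseteq> D" using hK assms(3,4) by auto
  have "sd (L \<union> h ` A) (L \<union> h ` B) = sd (h ` A) (h ` B)"
    using hA assms(1) unfolding sd_def by blast
  also have "\<dots> = h ` sd A B" unfolding sd_def
    using inj_on_image_set_diff[OF inj, of A B] inj_on_image_set_diff[OF inj, of B A] assms(3,4)
    by (auto simp: image_Un)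
  finally have "sd (L \<union> h ` A) (L \<union> h ` B) = h ` sd A B" .
  moreover have "inj_on h (sd A B)" using assms(3,4) unfolding sd_def
    by (intro inj_on_subset[OF inj]) auto
  ultimately show ?thesis by (simp add: card_image)
qed

lemma q_eq:
  assumes k: "k \<ge> 1"
  shows "q n k = card {p. good n (fst p) (snd p) \<and> card (snd p) = k}"
proof -
  define Gk where "Gk = {p. good n (fst p) (snd p) \<and> card (snd p) = k}"
  define SS where "SS = {S. S \<subseteq> omega_vertices n \<and>
     (\<exists>f. bij_betw f (Pow {..<k}) S \<and>
          (\<forall>A\<in>Pow {..<k}. \<forall>B\<in>Pow {..<k}. omega_adj (f A) (f B) \<longleftrightarrow> hypercube_adj A B))}"
  have "SS = (\<lambda>p. img (fst p) (snd p)) ` Gk"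
  proof
    show "SS \<subseteq> (\<lambda>p. img (fst p) (snd p)) ` Gk"
    proof
      fix S assume "S \<in> SS"
      then have SV: "S \<subseteq> omega_vertices n" and "\<exists>f. bij_betw f (Pow {..<k}) S \<and>
          (\<forall>A\<in>Pow {..<k}. \<forall>B\<in>Pow {..<k}. omega_adj (f A) (f B) \<longleftrightarrow> hypercube_adj A B)"
        unfolding SS_def by simp_all
      then obtain f where bij: "bij_betw f (Pow {..<k}) S"
        and adj: "\<forall>A\<in>Pow {..<k}. \<forall>B\<in>Pow {..<k}. omega_adj (f A) (f B) \<longleftrightarrow> hypercube_adj A B"
        by blast
      have inj: "inj_on f (Pow {..<k})" and Sf: "S = f ` Pow {..<k}" using bij unfolding bij_betw_def by auto
      have adj': "\<exists>x. sd (f A) (f B) = {x}" if "A \<subseteq> {..<k}" "B \<subseteq> {..<k}" "\<exists>x. sd A B = {x}" for A B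
      proof -
        have "omega_adj (f A) (f B) \<longleftrightarrow> hypercube_adj A B" using adj that(1,2) by blast
        then show ?thesis using that(3) by (simp add: omega_adj_sd hyper_adj_sd)
      qed
      obtain g where ginj: "inj_on g {..<k}" and gf: "\<forall>A. A \<subseteq> {..<k} \<longrightarrow> f A = sd (f {}) (g ` A)"
        using cube_shape[OF inj _ adj'] by blast
      define F where "F = f {}"
      define D where "D = g ` {..<k}"
      define L where "L = F - D"
      have "image g ` Pow {..<k} = Pow D" by (rule image_Pow_surj) (simp add: D_def)
      have gf': "f A = sd F (g ` A)" if "A \<in> Pow {..<k}" for A
        using gf that unfolding F_def by blast
      have "S = (\<lambda>A. sd F (g ` A)) ` Pow {..<k}" unfolding Sf
        by (rule image_cong) (simp_all add: gf')
      also have "\<dots> = (\<lambda>T. sd F T) ` (image g ` Pow {..<k})" by (simp add: image_image)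
      also have "\<dots> = (\<lambda>T. sd F T) ` Pow D" using \<open>image g ` Pow {..<k} = Pow D\<close> by simp
      also have "\<dots> = img L D"
      proof
        show "(\<lambda>T. sd F T) ` Pow D \<subseteq> img L D"
        proof
          fix X assume "X \<in> (\<lambda>T. sd F T) ` Pow D"
          then obtain T where T: "T \<subseteq> D" "X = sd F T" by auto
          have "X = L \<union> sd (F \<inter> D) T" using T unfolding L_def sd_def by auto
          moreover have "sd (F \<inter> D) T \<subseteq> D" using T unfolding sd_def by auto
          ultimately show "X \<in> img L D" unfolding img_def by auto
        qed
      next
        show "img L D \<subseteq> (\<lambda>T. sd F T) ` Pow D"
        proof
          fix X assume "X \<in> img L D"
          then obtain T where T: "T \<subseteq> D" "X = L \<union> T" unfolding img_def by auto
          have "X = sd F (sd (F \<inter> D) T)" using T unfolding L_def sd_def by auto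
          moreover have "sd (F \<inter> D) T \<subseteq> D" using T unfolding sd_def by auto
          ultimately show "X \<in> (\<lambda>T. sd F T) ` Pow D" by auto
        qed
      qed
      finally have SI: "S = img L D" .
      have LD: "L \<inter> D = {}" unfolding L_def by auto
      have cD: "card D = k" unfolding D_def using ginj by (simp add: card_image)
      have "\<forall>T\<subseteq>D. xi_filter n (L \<union> T)"
      proof (intro allI impI)
        fix T assume "T \<subseteq> D"
        then have "L \<union> T \<in> S" unfolding SI img_def by blast
        then show "xi_filter n (L \<union> T)" using SV unfolding omega_vertices_def by blast
      qed
      then have "good n L D" using filters_good[OF LD] by blast
      then have "(L, D) \<in> Gk" unfolding Gk_def using cD by simp
      then show "S \<in> (\<lambda>p. img (fst p) (snd p)) ` Gk" using SI by (simp add: rev_image_eqI)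
    qed
  next
    show "(\<lambda>p. img (fst p) (snd p)) ` Gk \<subseteq> SS"
    proof
      fix S assume "S \<in> (\<lambda>p. img (fst p) (snd p)) ` Gk"
      then obtain p where p: "p \<in> Gk" and SIp: "S = img (fst p) (snd p)" by (rule imageE)
      define L where "L = fst p"
      define D where "D = snd p"
      have G: "good n L D" and cD: "card D = k" using p unfolding Gk_def L_def D_def by auto
      have SI: "S = img L D" using SIp unfolding L_def D_def .
      have LD: "L \<inter> D = {}" using G unfolding good_def by blast
      have finD: "finite D" using cD k by (intro card_ge_0_finite) simp
      obtain h where h: "bij_betw h {..<k} D"
        using ex_bij_betw_nat_finite[OF finD] cD by (auto simp: atLeast0LessThan)
      define f where "f A = L \<union> h ` A" for A
      have SV: "S \<subseteq> omega_vertices n"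
      proof
        fix X assume "X \<in> S"
        then obtain T where T: "T \<subseteq> D" "X = L \<union> T" unfolding SI img_def by blast
        have "xi_filter n (L \<union> T)" using filters_good[OF LD] G T(1) by blast
        then show "X \<in> omega_vertices n" unfolding omega_vertices_def T(2) by simp
      qed
      have b1: "bij_betw (image h) (Pow {..<k}) (Pow D)" using bij_betw_image_Pow[OF h] .
      have b2: "bij_betw (\<lambda>T. L \<union> T) (Pow D) S"
        unfolding SI img_def
      proof (rule inj_on_imp_bij_betw, rule inj_onI)
        fix X Y assume "X \<in> Pow D" "Y \<in> Pow D" "L \<union> X = L \<union> Y"
        then show "X = Y" using LD by blast
      qed
      have bij: "bij_betw f (Pow {..<k}) S"
        using bij_betw_trans[OF b1 b2] unfolding f_def comp_def by simp
      have adj: "\<forall>A\<in>Pow {..<k}. \<forall>B\<in>Pow {..<k}. omega_adj (f A) (f B) \<longleftrightarrow> hypercube_adj A B"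
      proof (intro ballI)
        fix A B assume "A \<in> Pow {..<k}" "B \<in> Pow {..<k}"
        then have "A \<subseteq> {..<k}" "B \<subseteq> {..<k}" by auto
        then have c: "card (sd (f A) (f B)) = card (sd A B)"
          unfolding f_def by (rule sd_image_card[OF LD h])
        have "omega_adj (f A) (f B) \<longleftrightarrow> card (sd (f A) (f B)) = 1"
          by (simp add: omega_adj_sd card_1_singleton_iff)
        moreover have "hypercube_adj A B \<longleftrightarrow> card (sd A B) = 1"
          by (simp add: hypercube_adj_def sd_def)
        ultimately show "omega_adj (f A) (f B) \<longleftrightarrow> hypercube_adj A B" using c by simp
      qed
      have "\<exists>f. bij_betw f (Pow {..<k}) S \<and>
          (\<forall>A\<in>Pow {..<k}. \<forall>B\<in>Pow {..<k}. omega_adj (f A) (f B) \<longleftrightarrow> hypercube_adj A B)"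
        using bij adj by blast
      then show "S \<in> SS" unfolding SS_def using SV by simp
    qed
  qed
  moreover have "inj_on (\<lambda>p. img (fst p) (snd p)) Gk"
  proof (rule inj_onI)
    fix p p' assume "p \<in> Gk" "p' \<in> Gk" "img (fst p) (snd p) = img (fst p') (snd p')"
    moreover have "fst p \<inter> snd p = {}" "fst p' \<inter> snd p' = {}"
      using \<open>p \<in> Gk\<close> \<open>p' \<in> Gk\<close> unfolding Gk_def good_def by auto
    ultimately have "fst p = fst p' \<and> snd p = snd p'" using img_inj by blast
    then show "p = p'" by (simp add: prod_eq_iff)
  qed
  ultimately have "card SS = card Gk" by (simp add: card_image)
  then show ?thesis unfolding q_def SS_def Gk_def .
qed



definition G :: "nat \<Rightarrow> (nat set \<times> nat set) set" where
  "G n = {p. good n (fst p) (snd p)}"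

lemma finite_G: "finite (G n)"
proof -
  have "G n \<subseteq> Pow {1..n} \<times> Pow {1..n}" unfolding G_def good_def by auto
  then show ?thesis by (rule finite_subset) auto
qed

definition st :: "nat \<Rightarrow> nat set \<times> nat set \<Rightarrow> nat" where
  "st n p = (if n \<in> fst p then 1 else if n \<in> snd p then 2 else 0)"

lemma st_lt: "st n p < 3" unfolding st_def by auto

definition W :: "nat \<Rightarrow> nat \<Rightarrow> rat fps" where
  "W n s = (\<Sum>p\<in>G n. if st n p = s then fps_X ^ card (snd p) else 0)"

definition TT :: "nat \<Rightarrow> rat fps" where
  "TT n = (\<Sum>p\<in>G n. fps_X ^ card (snd p))"

lemma sum_by_state:
  "(\<Sum>p\<in>G n. if P (st n p) then fps_X ^ card (snd p) else 0) =
   (if P 0 then W n 0 else 0) + (if P 1 then W n 1 else 0) + (if P 2 then W n 2 else 0)"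
proof -
  have e: "(if c then sum f A else 0) = sum (\<lambda>p. if c then f p else 0) A" for c and f :: "_ \<Rightarrow> rat fps" and A
    by simp
  show ?thesis unfolding W_def e sum.distrib[symmetric]
  proof (rule sum.cong[OF refl])
    fix p
    have "st n p = 0 \<or> st n p = 1 \<or> st n p = 2" using st_lt[of n p] by linarith
    then show "(if P (st n p) then fps_X ^ card (snd p) else 0) =
      (if P 0 then if st n p = 0 then fps_X ^ card (snd p) else 0 else 0) +
      (if P 1 then if st n p = 1 then fps_X ^ card (snd p) else 0 else 0) +
      (if P 2 then if st n p = 2 then fps_X ^ card (snd p) else 0 else 0)"
      by auto
  qed
qed

lemma TT_W: "TT n = W n 0 + W n 1 + W n 2"
  using sum_by_state[of "\<lambda>_. True" n] unfolding TT_def by simp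

definition allowed :: "nat \<Rightarrow> nat \<Rightarrow> nat \<Rightarrow> bool" where
  "allowed n s t \<longleftrightarrow> (if n = 0 then True else if down n then (t \<noteq> 0 \<longrightarrow> s = 1) else (s \<noteq> 0 \<longrightarrow> t = 1))"

definition ext :: "nat \<Rightarrow> nat \<Rightarrow> nat set \<times> nat set \<Rightarrow> nat set \<times> nat set" where
  "ext n t p = (if t = 1 then insert (Suc n) (fst p) else fst p, if t = 2 then insert (Suc n) (snd p) else snd p)"

definition SG :: "nat \<Rightarrow> ((nat set \<times> nat set) \<times> nat) set" where
  "SG n = {(p, t). p \<in> G n \<and> t < 3 \<and> allowed n (st n p) t}"

lemma G_range: "p \<in> G n \<Longrightarrow> fst p \<subseteq> {1..n} \<and> snd p \<subseteq> {1..n} \<and> fst p \<inter> snd p = {}"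
  unfolding G_def good_def by auto

lemma G_Suc: "G (Suc n) = (\<lambda>(p, t). ext n t p) ` SG n"
proof
  show "(\<lambda>(p, t). ext n t p) ` SG n \<subseteq> G (Suc n)"
  proof
    fix q assume "q \<in> (\<lambda>(p, t). ext n t p) ` SG n"
    then obtain p t where pt: "p \<in> G n" "t < 3" "allowed n (st n p) t" and q: "q = ext n t p"
      unfolding SG_def by auto
    obtain L D where p: "p = (L, D)" by fastforce
    have R: "L \<subseteq> {1..n}" "D \<subseteq> {1..n}" "L \<inter> D = {}" using G_range[OF pt(1)] p by auto
    have gp: "good n L D" using pt(1) p unfolding G_def by simp
    define L' where "L' = fst q"
    define D' where "D' = snd q"
    have L': "L' = (if t = 1 then insert (Suc n) L else L)" and D': "D' = (if t = 2 then insert (Suc n) D else D)"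
      unfolding L'_def D'_def q ext_def p by simp_all
    have "Suc n \<notin> L" "Suc n \<notin> D" using R by auto
    then have dis: "L' \<inter> D' = {}" using R(3) unfolding L' D' by auto
    have rng: "L' \<union> D' \<subseteq> {1..Suc n}" using R unfolding L' D' by auto
    have cov: "b \<in> L'" if c: "xi_cover (Suc n) a b" and a: "a \<in> L' \<union> D'" for a b
    proof (cases "xi_cover n a b")
      case True
      then have "a \<le> n" using xi_cover_range by auto
      then have "a \<in> L \<union> D" using a unfolding L' D' by (auto split: if_splits)
      then have "b \<in> L" using gp True unfolding good_def by blast
      then show ?thesis unfolding L' by simp
    next
      case False
      then have nc: "newcov n a b" using c xi_cover_Suc by blast
      then have n1: "n \<noteq> 0" unfolding newcov_def by simp
      show ?thesis
      proof (cases "down n")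
        case True
        then have ab: "a = Suc n" "b = n" using nc unfolding newcov_def by auto
        then have "t \<noteq> 0" using a \<open>Suc n \<notin> L\<close> \<open>Suc n \<notin> D\<close> unfolding L' D' by (auto split: if_splits)
        then have "st n p = 1" using pt(3) True n1 unfolding allowed_def by auto
        then have "n \<in> L" unfolding st_def p by (auto split: if_splits)
        then show ?thesis using ab unfolding L' by simp
      next
        case False
        then have ab: "a = n" "b = Suc n" using nc unfolding newcov_def by auto
        then have "a \<in> L \<union> D" using a unfolding L' D' by (auto split: if_splits)
        then have "st n p \<noteq> 0" using ab unfolding st_def p by auto
        then have "t = 1" using pt(3) False n1 unfolding allowed_def by auto
        then show ?thesis using ab unfolding L' by simp
      qed
    qed
    have "good (Suc n) L' D'" unfolding good_def using dis rng cov by blast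
    then show "q \<in> G (Suc n)" unfolding G_def L'_def D'_def by simp
  qed
next
  show "G (Suc n) \<subseteq> (\<lambda>(p, t). ext n t p) ` SG n"
  proof
    fix q assume qG: "q \<in> G (Suc n)"
    obtain L' D' where q: "q = (L', D')" by fastforce
    have gq: "good (Suc n) L' D'" using qG q unfolding G_def by simp
    have R: "L' \<subseteq> {1..Suc n}" "D' \<subseteq> {1..Suc n}" "L' \<inter> D' = {}" using gq unfolding good_def by auto
    define t where "t = st (Suc n) q"
    define L where "L = L' - {Suc n}"
    define D where "D = D' - {Suc n}"
    define p where "p = (L, D)"
    have "t < 3" unfolding t_def by (rule st_lt)
    have qe: "q = ext n t p"
      using R unfolding q t_def st_def ext_def p_def L_def D_def by auto
    have gp: "good n L D"
      unfolding good_def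
    proof (intro conjI allI impI)
      show "L \<inter> D = {}" using R unfolding L_def D_def by auto
      show "L \<union> D \<subseteq> {1..n}" using R unfolding L_def D_def by auto
      fix a b assume c: "xi_cover n a b" and a: "a \<in> L \<union> D"
      then have "b \<in> L'" using gq xi_cover_Suc unfolding good_def L_def D_def by blast
      moreover have "b \<le> n" using c xi_cover_range by auto
      ultimately show "b \<in> L" unfolding L_def by auto
    qed
    have al: "allowed n (st n p) t"
    proof (cases "n = 0")
      case True then show ?thesis unfolding allowed_def by simp
    next
      case n1: False
      show ?thesis
      proof (cases "down n")
        case True
        have "st n p = 1" if "t \<noteq> 0"
        proof -
          have "Suc n \<in> L' \<union> D'" using that unfolding t_def q st_def by (auto split: if_splits)
          moreover have "newcov n (Suc n) n" using True n1 unfolding newcov_def by auto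
          ultimately have "n \<in> L'" using gq xi_cover_Suc unfolding good_def by blast
          then show ?thesis unfolding st_def p_def L_def by simp
        qed
        then show ?thesis using True n1 unfolding allowed_def by auto
      next
        case False
        have "t = 1" if "st n p \<noteq> 0"
        proof -
          have "n \<in> L' \<union> D'" using that unfolding st_def p_def L_def D_def by (auto split: if_splits)
          moreover have "newcov n n (Suc n)" using False n1 unfolding newcov_def by auto
          ultimately have "Suc n \<in> L'" using gq xi_cover_Suc unfolding good_def by blast
          then show ?thesis unfolding t_def q st_def by simp
        qed
        then show ?thesis using False n1 unfolding allowed_def by auto
      qed
    qed
    have "(p, t) \<in> SG n" unfolding SG_def G_def using gp al \<open>t < 3\<close> p_def by simp
    then show "q \<in> (\<lambda>(p, t). ext n t p) ` SG n" using qe by force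
  qed
qed

lemma ext_inj: "inj_on (\<lambda>(p, t). ext n t p) (SG n)"
proof (rule inj_onI)
  fix x y assume a0: "x \<in> SG n" "y \<in> SG n" and e0: "(\<lambda>(p, t). ext n t p) x = (\<lambda>(p, t). ext n t p) y"
  obtain L D t where x: "x = ((L, D), t)" by (metis prod.exhaust)
  obtain L' D' t' where y: "y = ((L', D'), t')" by (metis prod.exhaust)
  have a: "((L, D), t) \<in> SG n" "((L', D'), t') \<in> SG n" using a0 x y by simp_all
  have e: "ext n t (L, D) = ext n t' (L', D')" using e0 x y by simp
  have R: "Suc n \<notin> L" "Suc n \<notin> D" "Suc n \<notin> L'" "Suc n \<notin> D'" "t < 3" "t' < 3"
    using a G_range[of "(L,D)" n] G_range[of "(L',D')" n] unfolding SG_def by auto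
  have e1: "(if t = 1 then insert (Suc n) L else L) = (if t' = 1 then insert (Suc n) L' else L')"
    and e2: "(if t = 2 then insert (Suc n) D else D) = (if t' = 2 then insert (Suc n) D' else D')"
    using e unfolding ext_def prod.inject fst_conv snd_conv by blast+
  have tt: "t = t'"
  proof -
    have "t = 1 \<longleftrightarrow> t' = 1" using e1 R by (auto split: if_splits)
    moreover have "t = 2 \<longleftrightarrow> t' = 2" using e2 R by (auto split: if_splits)
    ultimately show ?thesis using R by linarith
  qed
  have x1: "L = (if t = 1 then insert (Suc n) L else L) - {Suc n}" using R by simp
  have x2: "L' = (if t' = 1 then insert (Suc n) L' else L') - {Suc n}" using R by simp
  have x3: "D = (if t = 2 then insert (Suc n) D else D) - {Suc n}" using R by simp
  have x4: "D' = (if t' = 2 then insert (Suc n) D' else D') - {Suc n}" using R by simp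
  have "L = L'" using x1 x2 e1 by simp
  moreover have "D = D'" using x3 x4 e2 by simp
  ultimately show "x = y" using tt x y by simp
qed

lemma st_ext: "p \<in> G n \<Longrightarrow> t < 3 \<Longrightarrow> st (Suc n) (ext n t p) = t"
  unfolding st_def ext_def using G_range[of p n] by auto

lemma card_ext: "p \<in> G n \<Longrightarrow> card (snd (ext n t p)) = card (snd p) + (if t = 2 then 1 else 0)"
proof -
  assume "p \<in> G n"
  then have "Suc n \<notin> snd p" "finite (snd p)" using G_range[of p n] finite_subset[of "snd p" "{1..n}"] by auto
  then show ?thesis unfolding ext_def by simp
qed

lemma W_Suc:
  assumes "t0 < 3"
  shows "W (Suc n) t0 = (if t0 = 2 then fps_X else 1) *
    ((if allowed n 0 t0 then W n 0 else 0) + (if allowed n 1 t0 then W n 1 else 0) + (if allowed n 2 t0 then W n 2 else 0))"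
proof -
  have "W (Suc n) t0 = (\<Sum>q\<in>(\<lambda>(p, t). ext n t p) ` SG n. if st (Suc n) q = t0 then fps_X ^ card (snd q) else 0)"
    unfolding W_def G_Suc ..
  also have "\<dots> = (\<Sum>x\<in>SG n. (\<lambda>q. if st (Suc n) q = t0 then fps_X ^ card (snd q) else 0) ((\<lambda>(p, t). ext n t p) x))"
    by (simp add: sum.reindex[OF ext_inj] comp_def)
  also have "\<dots> = (\<Sum>x\<in>SG n. if snd x = t0 then fps_X ^ (card (snd (fst x)) + (if t0 = 2 then 1 else 0)) else (0::rat fps))"
    by (rule sum.cong[OF refl]) (auto simp: SG_def st_ext card_ext)
  also have "SG n = Sigma (G n) (\<lambda>p. {t. t < 3 \<and> allowed n (st n p) t})"
    unfolding SG_def by auto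
  also have "(\<Sum>x\<in>Sigma (G n) (\<lambda>p. {t. t < 3 \<and> allowed n (st n p) t}).
      if snd x = t0 then fps_X ^ (card (snd (fst x)) + (if t0 = 2 then 1 else 0)) else (0::rat fps)) =
    (\<Sum>p\<in>G n. \<Sum>t\<in>{t. t < 3 \<and> allowed n (st n p) t}.
      if t = t0 then fps_X ^ (card (snd p) + (if t0 = 2 then 1 else 0)) else 0)"
    by (subst sum.Sigma) (auto simp: finite_G case_prod_beta intro!: sum.cong)
  also have "\<dots> = (\<Sum>p\<in>G n. if allowed n (st n p) t0 then fps_X ^ (card (snd p) + (if t0 = 2 then 1 else 0)) else 0)"
    by (rule sum.cong[OF refl]) (simp add: sum.delta assms)
  also have "\<dots> = (if t0 = 2 then fps_X else 1) * (\<Sum>p\<in>G n. if allowed n (st n p) t0 then fps_X ^ card (snd p) else 0)"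
    by (auto simp: sum_distrib_left intro!: sum.cong)
  also have "\<dots> = (if t0 = 2 then fps_X else 1) *
    ((if allowed n 0 t0 then W n 0 else 0) + (if allowed n 1 t0 then W n 1 else 0) + (if allowed n 2 t0 then W n 2 else 0))"
    using sum_by_state[of "\<lambda>s. allowed n s t0" n] by simp
  finally show ?thesis .
qed




lemma G0: "G 0 = {({}, {})}"
  unfolding G_def good_def by (auto simp: xi_cover_def)

lemma W0: "W 0 s = (if s = 0 then 1 else 0)"
  unfolding W_def G0 st_def by simp

lemma W_Suc_expl:
  "W (Suc n) 0 = (if allowed n 0 0 then W n 0 else 0) + (if allowed n 1 0 then W n 1 else 0) + (if allowed n 2 0 then W n 2 else 0)"
  "W (Suc n) 1 = (if allowed n 0 1 then W n 0 else 0) + (if allowed n 1 1 then W n 1 else 0) + (if allowed n 2 1 then W n 2 else 0)"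
  "W (Suc n) 2 = fps_X * ((if allowed n 0 2 then W n 0 else 0) + (if allowed n 1 2 then W n 1 else 0) + (if allowed n 2 2 then W n 2 else 0))"
  using W_Suc[of 0 n] W_Suc[of 1 n] W_Suc[of 2 n] by simp_all

lemma allowed_down: "n \<noteq> 0 \<Longrightarrow> down n \<Longrightarrow> allowed n s t \<longleftrightarrow> (t \<noteq> 0 \<longrightarrow> s = 1)"
  unfolding allowed_def by simp

lemma allowed_up: "n \<noteq> 0 \<Longrightarrow> \<not> down n \<Longrightarrow> allowed n s t \<longleftrightarrow> (s \<noteq> 0 \<longrightarrow> t = 1)"
  unfolding allowed_def by simp

lemma W_down:
  assumes "n \<noteq> 0" "down n"
  shows "W (Suc n) 0 = TT n" "W (Suc n) 1 = W n 1" "W (Suc n) 2 = fps_X * W n 1"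
  using assms W_Suc[of 0 n] W_Suc[of 1 n] W_Suc[of 2 n] by (simp_all add: allowed_down TT_W)

lemma W_up:
  assumes "n \<noteq> 0" "\<not> down n"
  shows "W (Suc n) 0 = W n 0" "W (Suc n) 1 = TT n" "W (Suc n) 2 = fps_X * W n 0"
  using assms W_Suc[of 0 n] W_Suc[of 1 n] W_Suc[of 2 n] by (simp_all add: allowed_up TT_W)

lemma W1: "W 1 0 = 1" "W 1 1 = 1" "W 1 2 = fps_X"
  using W_Suc[of 0 0] W_Suc[of 1 0] W_Suc[of 2 0] by (simp_all add: allowed_def W0)

lemma down12: "down 1" "down 2" unfolding down_def by simp_all

lemma TT_vals: "TT 0 = 1" "TT 1 = 2 + fps_X" "TT 2 = 3 + 2 * fps_X" "TT 3 = 4 + 3 * fps_X"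
proof -
  show "TT 0 = 1" by (simp add: TT_W W0)
  show t1: "TT 1 = 2 + fps_X" using W1 TT_W[of 1] by simp
  have w2: "W 2 0 = 2 + fps_X" "W 2 1 = 1" "W 2 2 = fps_X"
    using W_down[of 1] down12 t1 W1 by (simp_all add: numeral_2_eq_2)
  show t2: "TT 2 = 3 + 2 * fps_X" using w2 by (simp add: TT_W)
  have w3: "W 3 0 = 3 + 2 * fps_X" "W 3 1 = 1" "W 3 2 = fps_X"
    using W_down[of 2] down12 t2 w2 by (simp_all add: numeral_3_eq_3)
  show "TT 3 = 4 + 3 * fps_X" using w3 by (simp add: TT_W)
qed

lemma down_alt: "n \<ge> 2 \<Longrightarrow> down n \<longleftrightarrow> \<not> down (Suc n)"
  unfolding down_def by auto

lemma TT_rec: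
  assumes "n \<ge> 2"
  shows "TT (Suc (Suc n)) = TT (Suc n) + (1 + fps_X) * TT n"
proof (cases "down n")
  case True
  then have u: "\<not> down (Suc n)" using down_alt assms by blast
  have n0: "n \<noteq> 0" "Suc n \<noteq> 0" using assms by auto
  show ?thesis
    using W_down[OF n0(1) True] W_up[OF n0(2) u]
    by (simp add: TT_W algebra_simps)
next
  case False
  then have u: "down (Suc n)" using down_alt assms by blast
  have n0: "n \<noteq> 0" "Suc n \<noteq> 0" using assms by auto
  show ?thesis
    using W_up[OF n0(1) False] W_down[OF n0(2) u]
    by (simp add: TT_W algebra_simps)
qed

lemma q_TT:
  assumes "k \<ge> 1"
  shows "of_nat (q n k) = TT n $ k"
proof -
  have "TT n $ k = (\<Sum>p\<in>G n. if card (snd p) = k then 1 else 0)"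
    unfolding TT_def fps_sum_nth by (auto intro!: sum.cong)
  also have "\<dots> = (\<Sum>p\<in>{p\<in>G n. card (snd p) = k}. 1)"
    by (simp add: sum.inter_filter[OF finite_G, symmetric])
  also have "\<dots> = of_nat (card {p\<in>G n. card (snd p) = k})" by simp
  also have "{p\<in>G n. card (snd p) = k} = {p. good n (fst p) (snd p) \<and> card (snd p) = k}"
    unfolding G_def by auto
  finally show ?thesis using q_eq[OF assms, of n] by simp
qed




definition DD :: "rat fps" where "DD = 1 - fps_X - fps_X ^ 2"

definition AA :: "nat \<Rightarrow> rat fps" where "AA k = Abs_fps (\<lambda>n. TT n $ k)"

lemma TT_nth_rec:
  assumes "n \<ge> 2"
  shows "TT (Suc (Suc n)) $ k = TT (Suc n) $ k + TT n $ k + (if k = 0 then 0 else TT n $ (k - 1))"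
  using TT_rec[OF assms] by (simp add: distrib_right)

lemma TT_nth_small:
  "TT 0 $ k = (if k = 0 then 1 else 0)"
  "TT 1 $ k = (if k = 0 then 2 else if k = 1 then 1 else 0)"
  "TT 2 $ k = (if k = 0 then 3 else if k = 1 then 2 else 0)"
  "TT 3 $ k = (if k = 0 then 4 else if k = 1 then 3 else 0)"
  by (subst TT_vals, simp add: fps_numeral_nth numeral_fps_const)+

lemma DD_mult_nth: "(DD * f) $ m = f $ m - (if m = 0 then 0 else f $ (m - 1)) - (if m < 2 then 0 else f $ (m - 2))"
proof -
  have "DD * f = f - fps_X * f - fps_X ^ 2 * f" unfolding DD_def by (simp add: algebra_simps)
  then show ?thesis by (simp add: fps_X_power_mult_nth)
qed

lemma TT1': "TT (Suc 0) $ k = (if k = 0 then 2 else if k = 1 then 1 else 0)"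
  using TT_nth_small(2) by simp

lemma DD0: "DD $ 0 = 1" unfolding DD_def by simp

definition cc :: "nat \<Rightarrow> rat fps" where
  "cc k = (if k = 1 then fps_X - 2 * fps_X ^ 3 else if k = 2 then - (fps_X ^ 3) else 0)"

lemma AA_rec:
  assumes k: "k \<ge> 1"
  shows "DD * AA k = fps_X ^ 2 * AA (k - 1) + cc k"
proof (rule fps_ext)
  fix m
  have ccn: "cc k $ i = (if k = 1 \<and> i = 1 then 1 else if k = 1 \<and> i = 3 then -2 else if k = 2 \<and> i = 3 then -1 else 0)" for i
    unfolding cc_def by (simp add: fps_numeral_nth numeral_fps_const)
  have "(m::nat) = 0 \<or> m = 1 \<or> m = 2 \<or> m = 3 \<or> (\<exists>j. m = j + 4)" by presburger
  then consider "m = 0" | "m = 1" | "m = 2" | "m = 3" | j where "m = j + 4" by blast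
  then show "(DD * AA k) $ m = (fps_X ^ 2 * AA (k - 1) + cc k) $ m"
  proof cases
    case 5
    have e: "j + 4 = Suc (Suc (j + 2))" "j + 3 = Suc (j + 2)" by simp_all
    have "TT (j + 4) $ k = TT (j + 3) $ k + TT (j + 2) $ k + TT (j + 2) $ (k - 1)"
      unfolding e using TT_nth_rec[of "j + 2" k] k by simp
    then show ?thesis using 5 k by (simp add: DD_mult_nth AA_def fps_X_power_mult_nth ccn add.commute[of 3 j])
  next
    case 1 then show ?thesis using k unfolding DD_mult_nth by (simp add: AA_def fps_X_power_mult_nth ccn TT_nth_small TT1')
  next
    case 2 then show ?thesis using k unfolding DD_mult_nth by (simp add: AA_def fps_X_power_mult_nth ccn TT_nth_small TT1')
  next
    case 3 then show ?thesis using k unfolding DD_mult_nth by (simp add: AA_def fps_X_power_mult_nth ccn TT_nth_small TT1')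
  next
    case 4 then show ?thesis using k unfolding DD_mult_nth by (simp add: AA_def fps_X_power_mult_nth ccn TT_nth_small TT1'; arith)
  qed
qed

lemma AA0: "DD * (AA 0 + 1 - fps_X) = 2 - fps_X"
proof (rule fps_ext)
  fix m
  have "(m::nat) = 0 \<or> m = 1 \<or> m = 2 \<or> m = 3 \<or> (\<exists>j. m = j + 4)" by presburger
  then consider "m = 0" | "m = 1" | "m = 2" | "m = 3" | j where "m = j + 4" by blast
  then show "(DD * (AA 0 + 1 - fps_X)) $ m = (2 - fps_X) $ m"
  proof cases
    case 5
    have e: "j + 4 = Suc (Suc (j + 2))" "j + 3 = Suc (j + 2)" by simp_all
    have "TT (j + 4) $ 0 = TT (j + 3) $ 0 + TT (j + 2) $ 0"
      unfolding e using TT_nth_rec[of "j + 2" 0] by simp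
    then show ?thesis using 5 by (simp add: DD_mult_nth AA_def fps_numeral_nth add.commute[of 3 j])
  next
    case 1 then show ?thesis unfolding DD_mult_nth by (simp add: AA_def TT_nth_small TT1' fps_numeral_nth DD0)
  next
    case 2 then show ?thesis unfolding DD_mult_nth by (simp add: AA_def TT_nth_small TT1' fps_numeral_nth DD0)
  next
    case 3 then show ?thesis unfolding DD_mult_nth by (simp add: AA_def TT_nth_small TT1' fps_numeral_nth DD0)
  next
    case 4 then show ?thesis unfolding DD_mult_nth by (simp add: AA_def TT_nth_small TT1' fps_numeral_nth DD0)
  qed
qed




lemma div_char:
  fixes g f h :: "rat fps"
  assumes "g $ 0 \<noteq> 0" "g * f = h"
  shows "f = h / g"
proof -
  have "h / g = h * inverse g" using assms(1) by (rule fps_divide_unit)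
  also have "\<dots> = f * (g * inverse g)" using assms(2) by (simp add: algebra_simps)
  also have "g * inverse g = 1" using assms(1) by (rule inverse_mult_eq_1')
  finally show ?thesis by simp
qed

lemma DDpow0: "(DD ^ j) $ 0 = 1"
  by (simp add: fps_nth_power_0 DD0)

lemma main_rel:
  assumes "k \<ge> 1"
  shows "DD ^ (k + 1) * (AA k - (if k = 1 then fps_X else 0)) = (2 - fps_X) * fps_X ^ (2 * k)"
  using assms
proof (induction k rule: nat_induct_at_least)
  case base
  have "DD * (AA 1 - fps_X) = DD * AA 1 - DD * fps_X" by (simp add: algebra_simps)
  also have "\<dots> = fps_X ^ 2 * AA 0 + cc 1 - DD * fps_X" using AA_rec[of 1] by simp
  also have "\<dots> = fps_X ^ 2 * (AA 0 + 1 - fps_X)"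
    by (simp add: DD_def cc_def algebra_simps power2_eq_square power3_eq_cube)
  finally have e: "DD * (AA 1 - fps_X) = fps_X ^ 2 * (AA 0 + 1 - fps_X)" .
  have "DD ^ (1 + 1) * (AA 1 - fps_X) = DD * (DD * (AA 1 - fps_X))" by (simp add: power2_eq_square algebra_simps)
  also have "\<dots> = fps_X ^ 2 * (DD * (AA 0 + 1 - fps_X))" unfolding e by (simp add: algebra_simps)
  also have "\<dots> = (2 - fps_X) * fps_X ^ (2 * 1)" unfolding AA0 by (simp add: algebra_simps power2_eq_square)
  finally show ?case by simp
next
  case (Suc k)
  have cc_eq: "fps_X ^ 2 * AA k + cc (Suc k) = fps_X ^ 2 * (AA k - (if k = 1 then fps_X else 0))"
    using Suc.hyps by (auto simp: cc_def algebra_simps power2_eq_square power3_eq_cube)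
  have "DD ^ (Suc k + 1) * (AA (Suc k) - (if Suc k = 1 then fps_X else 0)) = DD ^ (k + 1) * (DD * AA (Suc k))"
    using Suc.hyps by (simp add: algebra_simps)
  also have "\<dots> = DD ^ (k + 1) * (fps_X ^ 2 * AA k + cc (Suc k))" using AA_rec[of "Suc k"] by simp
  also have "\<dots> = fps_X ^ 2 * (DD ^ (k + 1) * (AA k - (if k = 1 then fps_X else 0)))"
    unfolding cc_eq by (simp add: algebra_simps)
  also have "\<dots> = fps_X ^ 2 * ((2 - fps_X) * fps_X ^ (2 * k))" using Suc.IH by simp
  also have "\<dots> = (2 - fps_X) * fps_X ^ (2 * Suc k)" by (simp add: algebra_simps power_add power2_eq_square)
  finally show ?case .
qed

theorem mainTheorem12:
  fixes k :: nat
  assumes "k \<ge> 1"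
  shows "Abs_fps (\<lambda>n. of_nat (q n k) :: rat) =
         (2 - fps_X) * fps_X ^ (2 * k) / (1 - fps_X - fps_X ^ 2) ^ (k + 1)
         + (if k = 1 then fps_X else 0)"
proof -
  have A: "Abs_fps (\<lambda>n. of_nat (q n k) :: rat) = AA k"
    unfolding AA_def using q_TT[OF assms] by simp
  have "AA k - (if k = 1 then fps_X else 0) = (2 - fps_X) * fps_X ^ (2 * k) / DD ^ (k + 1)"
    by (rule div_char[OF _ main_rel[OF assms]]) (simp only: DDpow0 one_neq_zero not_False_eq_True)
  then have "AA k = (2 - fps_X) * fps_X ^ (2 * k) / DD ^ (k + 1) + (if k = 1 then fps_X else 0)"
    by (simp add: algebra_simps)
  then show ?thesis unfolding A DD_def .
qed


end
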